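(* Let $\mathcal G$ be an MMPG arena. (i) Let $(\sigma,\gamma)$ be a well-behaved perfectly-incentivised strategy profile that is an incentive strategy profile; let $Q$ be the set of vertices occurring on $\pi_\sigma$, $S$ the set of vertices occurring infinitely often on $\pi_\sigma$, $p_e$ the limit frequency of each edge $e$ on $\pi_\sigma$, $p_v=\sum_{(v,w)\in E}p_{(v,w)}$ for $v\in V$, and $\gamma_p$ the constant incentive of follower $p$ along $\pi_\sigma$. Then $((p_v)_{v},(p_e)_{e},(\gamma_p)_{p})$ satisfies $\mathrm{LP}(Q,S)$. (ii) Conversely, let $(\sigma,\gamma)$ be any pair of a well-behaved strategy profile and an incentive profile, let $Q,S,p_e,p_v$ be defined from $\pi_\sigma$ as in (i), and suppose $((p_v),(p_e),(\gamma_p(\sigma))_p)$ satisfies $\mathrm{LP}(Q,S)$. Then the perfectly-incentivised strategy profile $(\sigma^*,\gamma^* )$ with $\pi_{\sigma^*}=\pi_\sigma$ and constant incentive $\gamma_p(\sigma)$ for each follower $p$ along the play is an incentive strategy profile.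
   Context: A multi-player mean-payoff game (MMPG) arena is a tuple $\mathcal G=(P,V,(V_p)_{p\in P},v_0,E,(r_p)_{p\in P})$ where $P$ is a finite set of players containing a distinguished leader $l\in P$ (the other players are called followers), $V$ is a finite set of vertices with initial vertex $v_0\in V$, $(V_p)_{p\in P}$ is a partition of $V$ (player $p$ owns $V_p$), $E\subseteq V\times V$ is an edge set such that every vertex has at least one successor, and $r_p:E\to\mathbb Q$ is the reward function of player $p$. A history is a finite sequence $h=v_0v_1\dots v_n$ starting at $v_0$ with $(v_i,v_{i+1})\in E$ for all $i<n$; $\mathsf{last}(h)=v_n$. A play is an infinite such sequence. A strategy of player $p$ is a function $\sigma_p$ assigning to every history $h$ with $\mathsf{last}(h)\in V_p$ a vertex $v$ with $(\mathsf{last}(h),v)\in E$. A strategy profile $\sigma=(\sigma_p)_{p\in P}$ determines a unique play $\pi_\sigma$. The raw payoff of player $p$ on a play $\pi=v_0v_1\dots$ is $r_p(\pi)=\liminf_{n\to\infty}\frac1n\sum_{i=0}^{n-1}r_p((v_i,v_{i+1}))$, and $r_p(\sigma):=r_p(\pi_\sigma)$. For a profile $\sigma$, a player $p$ and a strategy $\sigma'$ of $p$, $\sigma_{p,\sigma'}$ denotes the profile obtained from $\sigma$ by replacing $p$'s strategy with $\sigma'$. An incentive for a follower $p$ is a function $\gamma_p$ from histories to $\mathbb R_{\ge 0}$; its value on a play $\pi=v_0v_1\dots$ is $\gamma_p(\pi)=\liminf_{n\to\infty}\frac1n\sum_{i=1}^{n}\gamma_p(v_0\dots v_i)$, and $\gamma_p(\sigma):=\gamma_p(\pi_\sigma)$.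 An incentive profile is $\gamma=(\gamma_p)_{p\in P\setminus\{l\}}$. A pair $(\sigma,\gamma)$ is an incentive strategy profile (ISP) if for every follower $p$ and every strategy $\sigma'$ of $p$: $r_p(\sigma)+\gamma_p(\sigma)\ge r_p(\sigma_{p,\sigma'})+\gamma_p(\sigma_{p,\sigma'})$. For a follower $p$, $\mathcal G_p$ is the two-player zero-sum mean-payoff game on the graph $(V,E)$ from any start vertex, in which player $p$ controls $V_p$ and maximises the liminf-average of $r_p$, while a coalition of all other players (including the leader) controls $V\setminus V_p$ and minimises it. Such games are determined with optimal memoryless strategies for both sides; $\mathrm{val}_p(v)$ denotes the value of $\mathcal G_p$ from vertex $v$. Fix, for each follower $p$, optimal memoryless strategies of both sides in $\mathcal G_p$. Let $r_{\max}=\max_{p\in P,e\in E}r_p(e)$. A history $h$ is deviating for a profile $\sigma$ if it is not a prefix of $\pi_\sigma$; then $\mathsf{dev}(h,\sigma)$ denotes the owner of $v_i$ for the largest $i$ such that $v_0\dots v_i$ is a prefix of $h$ and $v_{i+1}\ne\sigma(v_0\dots v_i)$ (the most recent player to have deviated from $\sigma$). A perfectly-incentivised strategy profile (PSP) is a pair $(\sigma,\gamma)$ such that: (i) for every follower $p$, $\gamma_p$ is constant on the prefixes of $\pi_\sigma$ (this constant is also denoted $\gamma_p$); (ii) on every deviating history $h$ with $p=\mathsf{dev}(h,\sigma)$, $v=\mathsf{last}(h)$ owned by $p'$, the move $\sigma_{p'}(h)=v'$ is the move prescribed at $v$ by the fixed optimal memoryless strategy in $\mathcal G_p$ (of $p$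 if $p'=p$, of the coalition otherwise); (iii) on deviating histories incentives are $0$, except that if in (ii) $p'$ is a follower and $p'\ne p$, then $\gamma_{p'}(h\cdot v')=r_{\max}+1-r_{p'}((v,v'))$. A PSP is determined by its play and its constant incentives along the play. The limit frequency of an edge $e$ on a play $\pi=v_0v_1\dots$ is $\lim_{n\to\infty}\frac1n|\{i<n:(v_i,v_{i+1})=e\}|$ when this limit exists. A strategy profile $\sigma$ is well-behaved if every edge has a limit frequency on $\pi_\sigma$. For sets $S\subseteq Q\subseteq V$, the constraint system $\mathrm{LP}(Q,S)$ over real variables $p_v$ ($v\in V$), $p_e$ ($e\in E$), $\gamma_p$ ($p\in P\setminus\{l\}$) consists of: (1) $p_v=0$ for $v\notin S$ and $p_v\ge0$ for $v\in S$; (2) $p_e=0$ for $e\in E\setminus(S\times S)$ and $p_e\ge 0$ for $e\in E\cap(S\times S)$; (3) $\sum_{v\in V}p_v=1$; (4) $p_s=\sum_{(s,t)\in E}p_{(s,t)}$ for all $s\in S$ and $p_t=\sum_{(s,t)\in E}p_{(s,t)}$ for all $t\in S$; (5) $\gamma_p\ge 0$ and $\gamma_p+\sum_{e\in E}p_e r_p(e)\ge\max_{v\in Q}\mathrm{val}_p(v)$ for every follower $p$. Its objective is to maximise $\sum_{e\in E}p_e r_l(e)-\sum_{p\in P\setminus\{l\}}\gamma_p$. *)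

theory Defs
  imports "HOL-Analysis.Analysis"
begin

text \<open>Multi-player mean-payoff game arenas. The partition (V_p) is given by an owner function.\<close>

record ('p, 'v) arena =
  players :: "'p set"
  leader :: 'p
  verts :: "'v set"
  init :: 'v
  owner :: "'v \<Rightarrow> 'p"
  edges :: "('v \<times> 'v) set"
  rew :: "'p \<Rightarrow> 'v \<times> 'v \<Rightarrow> real"

definition mmpg_arena :: "('p, 'v) arena \<Rightarrow> bool" where
  "mmpg_arena G \<longleftrightarrow> finite (players G) \<and> leader G \<in> players G \<and> finite (verts G)
     \<and> init G \<in> verts G \<and> (\<forall>v\<in>verts G. owner G v \<in> players G)
     \<and> edges G \<subseteq> verts G \<times> verts G \<and> (\<forall>v\<in>verts G. \<exists>w. (v, w) \<in> edges G)
     \<and> (\<forall>p\<in>players G. \<forall>e\<in>edges G. rew G p e \<in> \<rat>)"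

definition followers :: "('p, 'v) arena \<Rightarrow> 'p set" where
  "followers G = players G - {leader G}"

definition rmax :: "('p, 'v) arena \<Rightarrow> real" where
  "rmax G = Max {rew G p e | p e. p \<in> players G \<and> e \<in> edges G}"

text \<open>Histories are nonempty vertex lists; the history of a profile (a single function on
  histories, whose value at h is the move of the owner of last h) from a start vertex.\<close>

definition is_hist_from :: "('p, 'v) arena \<Rightarrow> 'v \<Rightarrow> 'v list \<Rightarrow> bool" where
  "is_hist_from G v h \<longleftrightarrow> h \<noteq> [] \<and> hd h = v \<and>
     (\<forall>i. Suc i < length h \<longrightarrow> (h ! i, h ! Suc i) \<in> edges G)"

abbreviation is_hist :: "('p, 'v) arena \<Rightarrow> 'v list \<Rightarrow> bool" where
  "is_hist G h \<equiv> is_hist_from G (init G) h"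

fun hist :: "('v list \<Rightarrow> 'v) \<Rightarrow> 'v \<Rightarrow> nat \<Rightarrow> 'v list" where
  "hist \<sigma> v 0 = [v]"
| "hist \<sigma> v (Suc n) = hist \<sigma> v n @ [\<sigma> (hist \<sigma> v n)]"

definition play :: "('v list \<Rightarrow> 'v) \<Rightarrow> 'v \<Rightarrow> nat \<Rightarrow> 'v" where
  "play \<sigma> v n = last (hist \<sigma> v n)"

definition valid_for :: "('p, 'v) arena \<Rightarrow> 'p set \<Rightarrow> ('v list \<Rightarrow> 'v) \<Rightarrow> bool" where
  "valid_for G Ps s \<longleftrightarrow> (\<forall>h. h \<noteq> [] \<longrightarrow> last h \<in> verts G \<longrightarrow> owner G (last h) \<in> Ps
      \<longrightarrow> (last h, s h) \<in> edges G)"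

definition valid_profile :: "('p, 'v) arena \<Rightarrow> ('v list \<Rightarrow> 'v) \<Rightarrow> bool" where
  "valid_profile G \<sigma> = valid_for G UNIV \<sigma>"

text \<open>Profile in which the vertices of player p use s1 and all other vertices use s2
  (so \<sigma>_{p,\<sigma>'} is combine G p \<sigma>' \<sigma>).\<close>

definition combine :: "('p, 'v) arena \<Rightarrow> 'p \<Rightarrow> ('v list \<Rightarrow> 'v) \<Rightarrow> ('v list \<Rightarrow> 'v) \<Rightarrow> 'v list \<Rightarrow> 'v" where
  "combine G p s1 s2 = (\<lambda>h. if owner G (last h) = p then s1 h else s2 h)"

definition mean_payoff :: "('v \<times> 'v \<Rightarrow> real) \<Rightarrow> (nat \<Rightarrow> 'v) \<Rightarrow> ereal" where
  "mean_payoff w \<pi> = liminf (\<lambda>n. ereal ((\<Sum>i<n. w (\<pi> i, \<pi> (Suc i))) / real n))"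

definition payoff :: "('p, 'v) arena \<Rightarrow> 'p \<Rightarrow> ('v list \<Rightarrow> 'v) \<Rightarrow> ereal" where
  "payoff G p \<sigma> = mean_payoff (rew G p) (play \<sigma> (init G))"

definition incentive_profile :: "('p, 'v) arena \<Rightarrow> ('p \<Rightarrow> 'v list \<Rightarrow> real) \<Rightarrow> bool" where
  "incentive_profile G \<gamma> \<longleftrightarrow> (\<forall>p\<in>followers G. \<forall>h. is_hist G h \<longrightarrow> \<gamma> p h \<ge> 0)"

definition inc_value :: "('p, 'v) arena \<Rightarrow> ('p \<Rightarrow> 'v list \<Rightarrow> real) \<Rightarrow> 'p \<Rightarrow> ('v list \<Rightarrow> 'v) \<Rightarrow> ereal" where
  "inc_value G \<gamma> p \<sigma> =
     liminf (\<lambda>n. ereal ((\<Sum>i\<in>{1..n}. \<gamma> p (hist \<sigma> (init G) i)) / real n))"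

definition is_isp :: "('p, 'v) arena \<Rightarrow> ('v list \<Rightarrow> 'v) \<Rightarrow> ('p \<Rightarrow> 'v list \<Rightarrow> real) \<Rightarrow> bool" where
  "is_isp G \<sigma> \<gamma> \<longleftrightarrow> (\<forall>p\<in>followers G. \<forall>\<sigma>'. valid_for G {p} \<sigma>' \<longrightarrow>
      payoff G p \<sigma> + inc_value G \<gamma> p \<sigma>
        \<ge> payoff G p (combine G p \<sigma>' \<sigma>) + inc_value G \<gamma> p (combine G p \<sigma>' \<sigma>))"

definition game_val :: "('p, 'v) arena \<Rightarrow> 'p \<Rightarrow> 'v \<Rightarrow> ereal" where
  "game_val G p v = (SUP s1\<in>{s. valid_for G {p} s}. INF s2\<in>{s. valid_for G (- {p}) s}.
      mean_payoff (rew G p) (play (combine G p s1 s2) v))"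

definition opt_max :: "('p, 'v) arena \<Rightarrow> 'p \<Rightarrow> ('v \<Rightarrow> 'v) \<Rightarrow> bool" where
  "opt_max G p \<tau> \<longleftrightarrow> valid_for G {p} (\<lambda>h. \<tau> (last h)) \<and>
     (\<forall>v\<in>verts G. \<forall>s2. valid_for G (- {p}) s2 \<longrightarrow>
        mean_payoff (rew G p) (play (combine G p (\<lambda>h. \<tau> (last h)) s2) v) \<ge> game_val G p v)"

definition opt_min :: "('p, 'v) arena \<Rightarrow> 'p \<Rightarrow> ('v \<Rightarrow> 'v) \<Rightarrow> bool" where
  "opt_min G p \<tau> \<longleftrightarrow> valid_for G (- {p}) (\<lambda>h. \<tau> (last h)) \<and>
     (\<forall>v\<in>verts G. \<forall>s1. valid_for G {p} s1 \<longrightarrow>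
        mean_payoff (rew G p) (play (combine G p s1 (\<lambda>h. \<tau> (last h))) v) \<le> game_val G p v)"

definition deviating :: "('p, 'v) arena \<Rightarrow> ('v list \<Rightarrow> 'v) \<Rightarrow> 'v list \<Rightarrow> bool" where
  "deviating G \<sigma> h \<longleftrightarrow> is_hist G h \<and> h \<noteq> hist \<sigma> (init G) (length h - 1)"

definition dev :: "('p, 'v) arena \<Rightarrow> ('v list \<Rightarrow> 'v) \<Rightarrow> 'v list \<Rightarrow> 'p" where
  "dev G \<sigma> h = owner G (h ! (GREATEST i. Suc i < length h \<and> h ! Suc i \<noteq> \<sigma> (take (Suc i) h)))"

text \<open>Perfectly-incentivised strategy profiles, w.r.t. fixed memoryless strategies
  tmax p (of p) and tmin p (of the coalition) in G_p, for each follower p.\<close>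

definition is_psp :: "('p, 'v) arena \<Rightarrow> ('p \<Rightarrow> 'v \<Rightarrow> 'v) \<Rightarrow> ('p \<Rightarrow> 'v \<Rightarrow> 'v)
    \<Rightarrow> ('v list \<Rightarrow> 'v) \<Rightarrow> ('p \<Rightarrow> 'v list \<Rightarrow> real) \<Rightarrow> bool" where
  "is_psp G tmax tmin \<sigma> \<gamma> \<longleftrightarrow> valid_profile G \<sigma> \<and> incentive_profile G \<gamma> \<and>
     (\<forall>p\<in>followers G. \<forall>n. \<gamma> p (hist \<sigma> (init G) n) = \<gamma> p [init G]) \<and>
     (\<forall>h. deviating G \<sigma> h \<longrightarrow> dev G \<sigma> h \<in> followers G \<longrightarrow>
        \<sigma> h = (if owner G (last h) = dev G \<sigma> h then tmax (dev G \<sigma> h) (last h)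
                else tmin (dev G \<sigma> h) (last h))
      \<and> (\<forall>q\<in>followers G. \<gamma> q h =
           (if 2 \<le> length h \<and> deviating G \<sigma> (butlast h) \<and> last h = \<sigma> (butlast h)
               \<and> owner G (last (butlast h)) = q \<and> q \<noteq> dev G \<sigma> h
            then rmax G + 1 - rew G q (last (butlast h), last h) else 0)))"

definition freq_seq :: "(nat \<Rightarrow> 'v) \<Rightarrow> 'v \<times> 'v \<Rightarrow> nat \<Rightarrow> real" where
  "freq_seq \<pi> e n = real (card {i. i < n \<and> (\<pi> i, \<pi> (Suc i)) = e}) / real n"

definition freq :: "(nat \<Rightarrow> 'v) \<Rightarrow> 'v \<times> 'v \<Rightarrow> real" where
  "freq \<pi> e = lim (freq_seq \<pi> e)"

definition well_behaved :: "('p, 'v) arena \<Rightarrow> ('v list \<Rightarrow> 'v) \<Rightarrow> bool" where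
  "well_behaved G \<sigma> \<longleftrightarrow> (\<forall>e\<in>edges G. convergent (freq_seq (play \<sigma> (init G)) e))"

definition visited :: "(nat \<Rightarrow> 'v) \<Rightarrow> 'v set" where
  "visited \<pi> = range \<pi>"

definition inf_visited :: "(nat \<Rightarrow> 'v) \<Rightarrow> 'v set" where
  "inf_visited \<pi> = {v. \<exists>\<^sub>F n in sequentially. \<pi> n = v}"

definition LP_sat :: "('p, 'v) arena \<Rightarrow> 'v set \<Rightarrow> 'v set
    \<Rightarrow> ('v \<Rightarrow> real) \<Rightarrow> ('v \<times> 'v \<Rightarrow> real) \<Rightarrow> ('p \<Rightarrow> real) \<Rightarrow> bool" where
  "LP_sat G Q S pv pe g \<longleftrightarrow>
     (\<forall>v\<in>verts G. (v \<notin> S \<longrightarrow> pv v = 0) \<and> (v \<in> S \<longrightarrow> pv v \<ge> 0)) \<and>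
     (\<forall>e\<in>edges G. (e \<notin> S \<times> S \<longrightarrow> pe e = 0) \<and> (e \<in> S \<times> S \<longrightarrow> pe e \<ge> 0)) \<and>
     (\<Sum>v\<in>verts G. pv v) = 1 \<and>
     (\<forall>s\<in>S. pv s = (\<Sum>e\<in>{e\<in>edges G. fst e = s}. pe e)) \<and>
     (\<forall>t\<in>S. pv t = (\<Sum>e\<in>{e\<in>edges G. snd e = t}. pe e)) \<and>
     (\<forall>p\<in>followers G. g p \<ge> 0 \<and>
        ereal (g p + (\<Sum>e\<in>edges G. pe e * rew G p e)) \<ge> Max (game_val G p ` Q))"

end

theory Submission
  imports Defs
begin


lemma hist_len[simp]: "length (hist s v n) = Suc n"
  by (induction n) auto

lemma hist_ne[simp]: "hist s v n \<noteq> []"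
  by (induction n) auto

lemma hist_take: "i \<le> n \<Longrightarrow> take (Suc i) (hist s v n) = hist s v i"
proof (induction n)
  case 0 then show ?case by simp
next
  case (Suc n)
  show ?case
  proof (cases "i = Suc n")
    case True then show ?thesis by simp
  next
    case False then have "i \<le> n" using Suc by auto
    then show ?thesis using Suc.IH by simp
  qed
qed

lemma hist_nth: "i \<le> n \<Longrightarrow> hist s v n ! i = play s v i"
proof -
  assume a: "i \<le> n"
  have "hist s v n ! i = take (Suc i) (hist s v n) ! i" by (simp only: nth_take lessI)
  also have "\<dots> = hist s v i ! i" by (simp only: hist_take[OF a])
  also have "\<dots> = play s v i"
    by (simp add: play_def last_conv_nth)
  finally show ?thesis .
qed

lemma play_Suc: "play s v (Suc n) = s (hist s v n)"
  by (simp add: play_def)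

lemma play_0[simp]: "play s v 0 = v"
  by (simp add: play_def)

lemma hist_hd: "hd (hist s v n) = v"
  by (induction n) auto

lemma valid_steps:
  assumes "mmpg_arena G" "valid_for G UNIV s" "v \<in> verts G"
  shows "play s v i \<in> verts G \<and> (play s v i, play s v (Suc i)) \<in> edges G"
proof (induction i)
  case 0
  have "(v, s [v]) \<in> edges G" using assms unfolding valid_for_def by (metis last.simps list.distinct(1) UNIV_I)
  then show ?case using assms by (simp add: play_Suc)
next
  case (Suc i)
  then have "play s v (Suc i) \<in> verts G" using assms(1) unfolding mmpg_arena_def by auto
  moreover have "(play s v (Suc i), s (hist s v (Suc i))) \<in> edges G"
    using assms(2) calculation unfolding valid_for_def by (metis hist_ne play_def UNIV_I)
  ultimately show ?case by (simp add: play_Suc)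
qed

lemma valid_hist:
  assumes "mmpg_arena G" "valid_for G UNIV s" "v \<in> verts G"
  shows "is_hist_from G v (hist s v n)"
  unfolding is_hist_from_def
  using valid_steps[OF assms] by (auto simp: hist_hd hist_nth)

lemma combine_valid:
  assumes "valid_for G {p} s1" "valid_for G (- {p}) s2"
  shows "valid_for G UNIV (combine G p s1 s2)"
  using assms unfolding valid_for_def combine_def by auto

lemma hist_shift:
  assumes base: "hist t v k = P @ [u]"
    and step: "\<And>i. hist t v (k+i) = P @ hist r u i \<Longrightarrow> t (P @ hist r u i) = r (hist r u i)"
  shows "hist t v (k+i) = P @ hist r u i"
proof (induction i)
  case 0 then show ?case using base by simp
next
  case (Suc i)
  have "hist t v (k + Suc i) = hist t v (k+i) @ [t (hist t v (k+i))]" by simp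
  also have "\<dots> = P @ hist r u i @ [r (hist r u i)]" using Suc step[OF Suc] by (metis append.assoc)
  finally show ?case by (simp only: hist.simps(2))
qed

lemma play_shift:
  assumes "\<And>i. hist t v (k+i) = P @ hist r u i"
  shows "play t v (k+i) = play r u i"
  using assms[of i] by (simp add: play_def)



lemma liminf_ereal_lim:
  fixes f :: "nat \<Rightarrow> real"
  assumes "f \<longlonglongrightarrow> L"
  shows "liminf (\<lambda>n. ereal (f n)) = ereal L"
  by (rule lim_imp_Liminf) (auto intro: tendsto_ereal assms)

lemma card_Suc_filter:
  "real (card {i. i < Suc N \<and> P i}) = real (card {i. i < N \<and> P i}) + (if P N then 1 else 0)"
proof -
  have fin: "finite {i. i < N \<and> P i}" by auto
  show ?thesis
  proof (cases "P N")
    case True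
    then have "{i. i < Suc N \<and> P i} = insert N {i. i < N \<and> P i}" by auto
    then show ?thesis using True fin by simp
  next
    case False
    then have "{i. i < Suc N \<and> P i} = {i. i < N \<and> P i}" using less_Suc_eq by auto
    then show ?thesis using False by simp
  qed
qed

lemma sum_steps:
  fixes f :: "'v \<times> 'v \<Rightarrow> real"
  assumes E: "finite E" and st: "\<forall>i. (\<pi> i, \<pi> (Suc i)) \<in> E"
  shows "(\<Sum>i<N. f (\<pi> i, \<pi> (Suc i))) = (\<Sum>e\<in>E. real (card {i. i < N \<and> (\<pi> i, \<pi> (Suc i)) = e}) * f e)"
proof (induction N)
  case 0 then show ?case by simp
next
  case (Suc N)
  have "(\<Sum>e\<in>E. real (card {i. i < Suc N \<and> (\<pi> i, \<pi> (Suc i)) = e}) * f e)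
      = (\<Sum>e\<in>E. real (card {i. i < N \<and> (\<pi> i, \<pi> (Suc i)) = e}) * f e)
        + (\<Sum>e\<in>E. (if (\<pi> N, \<pi> (Suc N)) = e then 1 else 0) * f e)"
    by (simp add: card_Suc_filter distrib_right sum.distrib)
  also have "(\<Sum>e\<in>E. (if (\<pi> N, \<pi> (Suc N)) = e then 1 else 0) * f e) = f (\<pi> N, \<pi> (Suc N))"
  proof -
    have "\<And>e. (if (\<pi> N, \<pi> (Suc N)) = e then 1 else 0) * f e = (if (\<pi> N, \<pi> (Suc N)) = e then f e else 0)" by simp
    then show ?thesis using st E by (simp add: sum.delta)
  qed
  finally show ?case using Suc by simp
qed

lemma avg_freq:
  fixes f :: "'v \<times> 'v \<Rightarrow> real"
  assumes E: "finite E" and st: "\<forall>i. (\<pi> i, \<pi> (Suc i)) \<in> E"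
  shows "(\<Sum>i<N. f (\<pi> i, \<pi> (Suc i))) / real N = (\<Sum>e\<in>E. freq_seq \<pi> e N * f e)"
  unfolding sum_steps[OF assms] freq_seq_def sum_divide_distrib by (simp add: field_simps)

lemma avg_tendsto:
  fixes f :: "'v \<times> 'v \<Rightarrow> real"
  assumes E: "finite E" and st: "\<forall>i. (\<pi> i, \<pi> (Suc i)) \<in> E"
    and cv: "\<forall>e\<in>E. convergent (freq_seq \<pi> e)"
  shows "(\<lambda>N. (\<Sum>i<N. f (\<pi> i, \<pi> (Suc i))) / real N) \<longlonglongrightarrow> (\<Sum>e\<in>E. freq \<pi> e * f e)"
  unfolding avg_freq[OF E st]
  by (intro tendsto_sum tendsto_mult_right) (use cv in \<open>auto simp: freq_def convergent_LIMSEQ_iff\<close>)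

lemma mp_conv:
  assumes E: "finite E" and st: "\<forall>i. (\<pi> i, \<pi> (Suc i)) \<in> E"
    and cv: "\<forall>e\<in>E. convergent (freq_seq \<pi> e)"
  shows "mean_payoff w \<pi> = ereal (\<Sum>e\<in>E. freq \<pi> e * w e)"
  unfolding mean_payoff_def by (rule liminf_ereal_lim[OF avg_tendsto[OF assms]])

lemma liminf_ereal_perturb:
  fixes f g :: "nat \<Rightarrow> real"
  assumes "(\<lambda>n. f n - g n) \<longlonglongrightarrow> 0"
  shows "liminf (\<lambda>n. ereal (f n)) = liminf (\<lambda>n. ereal (g n))"
proof -
  have "(\<lambda>n. ereal (f n - g n)) \<longlonglongrightarrow> ereal 0" using assms by (intro tendsto_ereal)
  then have "liminf (\<lambda>n. ereal (f n - g n) + ereal (g n)) = ereal 0 + liminf (\<lambda>n. ereal (g n))"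
    by (intro ereal_liminf_lim_add) auto
  then show ?thesis by (simp add: zero_ereal_def[symmetric])
qed

lemma mp_shift:
  fixes w :: "'v \<times> 'v \<Rightarrow> real"
  assumes bd: "\<forall>i. \<bar>w (\<pi> i, \<pi> (Suc i))\<bar> \<le> B"
  shows "mean_payoff w (\<lambda>i. \<pi> (n + i)) = mean_payoff w \<pi>"
proof -
  define a where "a N = (\<Sum>i<N. w (\<pi> i, \<pi> (Suc i))) / real N" for N
  define b where "b N = (\<Sum>i<N. w (\<pi> (n + i), \<pi> (Suc (n + i)))) / real N" for N
  have B0: "0 \<le> B" using bd by (meson abs_ge_zero order_trans)
  have split: "(\<Sum>i<N+n. w (\<pi> i, \<pi> (Suc i))) = (\<Sum>i<n. w (\<pi> i, \<pi> (Suc i))) + (\<Sum>i<N. w (\<pi> (n + i), \<pi> (Suc (n + i))))" for N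
    by (induction N) (auto simp: add.commute add.left_commute)
  define C where "C = (\<Sum>i<n. w (\<pi> i, \<pi> (Suc i)))"
  define T where "T N = (\<Sum>i<N. w (\<pi> (n + i), \<pi> (Suc (n + i))))" for N
  have Tb: "\<bar>T N\<bar> \<le> B * real N" for N
  proof -
    have "\<bar>T N\<bar> \<le> (\<Sum>i<N. \<bar>w (\<pi> (n + i), \<pi> (Suc (n + i)))\<bar>)" unfolding T_def by (rule sum_abs)
    also have "\<dots> \<le> (\<Sum>i<N. B)" by (rule sum_mono) (use bd in auto)
    finally show ?thesis by (simp add: mult.commute)
  qed
  define K where "K = \<bar>C\<bar> + B * real n"
  have diffb: "\<bar>a (N + n) - b N\<bar> \<le> K / real N" if N1: "N \<ge> 1" for N
  proof -
    have Npos: "real N > 0" using N1 by simp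
    have eq: "a (N + n) - b N = (C * real N - T N * real n) / (real N * (real N + real n))"
      unfolding a_def b_def split C_def[symmetric] T_def[symmetric] using Npos
      by (simp add: field_simps)
    have num: "\<bar>C * real N - T N * real n\<bar> \<le> K * real N"
    proof -
      have "\<bar>C * real N - T N * real n\<bar> \<le> \<bar>C\<bar> * real N + \<bar>T N\<bar> * real n"
        by (simp add: abs_mult abs_triangle_ineq4 order_trans[OF abs_triangle_ineq4])
      also have "\<dots> \<le> \<bar>C\<bar> * real N + B * real N * real n"
        using Tb[of N] by (intro add_left_mono mult_right_mono) auto
      finally show ?thesis unfolding K_def by (simp add: algebra_simps)
    qed
    have "\<bar>a (N + n) - b N\<bar> = \<bar>C * real N - T N * real n\<bar> / (real N * (real N + real n))"
      unfolding eq using Npos by (simp add: abs_divide abs_mult)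
    also have "\<dots> \<le> K * real N / (real N * (real N + real n))"
      using num Npos by (intro divide_right_mono) auto
    also have "\<dots> = K / (real N + real n)" using Npos by simp
    also have "\<dots> \<le> K / real N"
      using Npos B0 by (intro divide_left_mono) (auto simp: K_def)
    finally show ?thesis .
  qed
  have "(\<lambda>N. K / real N) \<longlonglongrightarrow> 0"
    using tendsto_mult_right_zero[OF lim_inverse_n, of K] by (simp add: divide_inverse)
  then have lim0: "(\<lambda>N. a (N + n) - b N) \<longlonglongrightarrow> 0"
    by (rule Lim_null_comparison[rotated]) (use diffb in \<open>auto intro: eventually_sequentiallyI[of 1]\<close>)
  have "mean_payoff w \<pi> = liminf (\<lambda>N. ereal (a N))" unfolding mean_payoff_def a_def ..
  also have "\<dots> = liminf (\<lambda>N. ereal (a (N + n)))" by (rule liminf_shift_k[symmetric])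
  also have "\<dots> = liminf (\<lambda>N. ereal (b N))" by (rule liminf_ereal_perturb[OF lim0])
  also have "\<dots> = mean_payoff w (\<lambda>i. \<pi> (n + i))" unfolding mean_payoff_def b_def by simp
  finally show ?thesis ..
qed



context
  fixes \<pi> :: "nat \<Rightarrow> 'v" and E :: "('v \<times> 'v) set"
  assumes E: "finite E" and st: "\<forall>i. (\<pi> i, \<pi> (Suc i)) \<in> E"
    and cv: "\<forall>e\<in>E. convergent (freq_seq \<pi> e)"
begin

lemma freq_lim: "e \<in> E \<Longrightarrow> freq_seq \<pi> e \<longlonglongrightarrow> freq \<pi> e"
  using cv by (auto simp: freq_def convergent_LIMSEQ_iff)

lemma freq_nonneg: "e \<in> E \<Longrightarrow> freq \<pi> e \<ge> 0"
  by (rule LIMSEQ_le_const[OF freq_lim]) (auto simp: freq_seq_def)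

lemma freq_zero:
  assumes e: "e \<in> E" and nS: "e \<notin> inf_visited \<pi> \<times> inf_visited \<pi>"
  shows "freq \<pi> e = 0"
proof -
  obtain a b where ab: "e = (a, b)" by (cases e)
  have "\<exists>N0. \<forall>i. (\<pi> i, \<pi> (Suc i)) = e \<longrightarrow> i < N0"
  proof (cases "a \<in> inf_visited \<pi>")
    case False
    then have "eventually (\<lambda>n. \<pi> n \<noteq> a) sequentially"
      unfolding inf_visited_def by (simp add: not_frequently)
    then obtain N0 where "\<forall>n\<ge>N0. \<pi> n \<noteq> a" by (auto simp: eventually_sequentially)
    then show ?thesis using ab by (metis not_le prod.inject)
  next
    case True
    then have "b \<notin> inf_visited \<pi>" using nS ab by auto
    then have "eventually (\<lambda>n. \<pi> n \<noteq> b) sequentially"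
      unfolding inf_visited_def by (simp add: not_frequently)
    then obtain N0 where "\<forall>n\<ge>N0. \<pi> n \<noteq> b" by (auto simp: eventually_sequentially)
    then show ?thesis using ab by (metis Suc_leI le_SucI not_le prod.inject)
  qed
  then obtain N0 where N0: "\<forall>i. (\<pi> i, \<pi> (Suc i)) = e \<longrightarrow> i < N0" by blast
  have up: "freq_seq \<pi> e N \<le> real N0 * inverse (real N)" for N
  proof -
    have "{i. i < N \<and> (\<pi> i, \<pi> (Suc i)) = e} \<subseteq> {..<N0}" using N0 by auto
    then have "card {i. i < N \<and> (\<pi> i, \<pi> (Suc i)) = e} \<le> N0"
      by (metis card_lessThan card_mono finite_lessThan)
    then show ?thesis unfolding freq_seq_def by (simp add: divide_inverse mult_right_mono)
  qed
  have lim: "(\<lambda>N. real N0 * inverse (real N)) \<longlonglongrightarrow> 0"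
    using tendsto_mult_right_zero[OF lim_inverse_n, of "real N0"] by simp
  have "freq_seq \<pi> e \<longlonglongrightarrow> 0"
  proof (rule tendsto_sandwich[of "\<lambda>_. 0" _ _ "\<lambda>N. real N0 * inverse (real N)"])
    show "\<forall>\<^sub>F n in sequentially. 0 \<le> freq_seq \<pi> e n" unfolding freq_seq_def by simp
    show "\<forall>\<^sub>F n in sequentially. freq_seq \<pi> e n \<le> real N0 * inverse (real n)"
      using up by simp
  qed (use lim in auto)
  then show ?thesis using freq_lim[OF e] LIMSEQ_unique by blast
qed

lemma freq_sum1: "(\<Sum>e\<in>E. freq \<pi> e) = 1"
proof -
  have a: "(\<lambda>N. (\<Sum>i<N. (\<lambda>_. 1::real) (\<pi> i, \<pi> (Suc i))) / real N) \<longlonglongrightarrow> (\<Sum>e\<in>E. freq \<pi> e * 1)"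
    by (rule avg_tendsto[OF E st cv])
  have "eventually (\<lambda>N. (\<Sum>i<N. (\<lambda>_. 1::real) (\<pi> i, \<pi> (Suc i))) / real N = 1) sequentially"
    by (rule eventually_sequentiallyI[of 1]) simp
  then have "(\<lambda>N. (\<Sum>i<N. (\<lambda>_. 1::real) (\<pi> i, \<pi> (Suc i))) / real N) \<longlonglongrightarrow> 1"
    by (rule tendsto_eventually)
  then show ?thesis using a LIMSEQ_unique by fastforce
qed

lemma freq_flow:
  "(\<Sum>e\<in>{e\<in>E. fst e = t}. freq \<pi> e) = (\<Sum>e\<in>{e\<in>E. snd e = t}. freq \<pi> e)"
proof -
  define fo where "fo e = (if fst e = t then 1 else (0::real))" for e :: "'v \<times> 'v"
  define fi where "fi e = (if snd e = t then 1 else (0::real))" for e :: "'v \<times> 'v"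
  define x where "x i = (if \<pi> i = t then 1 else (0::real))" for i
  have o: "(\<lambda>N. (\<Sum>i<N. fo (\<pi> i, \<pi> (Suc i))) / real N) \<longlonglongrightarrow> (\<Sum>e\<in>E. freq \<pi> e * fo e)"
    by (rule avg_tendsto[OF E st cv])
  have i: "(\<lambda>N. (\<Sum>i<N. fi (\<pi> i, \<pi> (Suc i))) / real N) \<longlonglongrightarrow> (\<Sum>e\<in>E. freq \<pi> e * fi e)"
    by (rule avg_tendsto[OF E st cv])
  have d: "(\<Sum>i<N. fi (\<pi> i, \<pi> (Suc i))) / real N - (\<Sum>i<N. fo (\<pi> i, \<pi> (Suc i))) / real N
      = (x N - x 0) * inverse (real N)" for N
  proof -
    have "(\<Sum>i<N. fi (\<pi> i, \<pi> (Suc i))) - (\<Sum>i<N. fo (\<pi> i, \<pi> (Suc i))) = (\<Sum>i<N. x (Suc i) - x i)"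
      by (simp add: fi_def fo_def x_def sum_subtractf)
    also have "\<dots> = x N - x 0" by (rule sum_lessThan_telescope)
    finally show ?thesis by (metis diff_divide_distrib divide_inverse)
  qed
  have xb: "\<bar>x N - x 0\<bar> \<le> 1" for N by (simp add: x_def)
  have "(\<lambda>N. (x N - x 0) * inverse (real N)) \<longlonglongrightarrow> 0"
  proof (rule Lim_null_comparison)
    show "\<forall>\<^sub>F N in sequentially. norm ((x N - x 0) * inverse (real N)) \<le> 1 * inverse (real N)"
    proof (rule always_eventually, rule allI)
      fix N
      have "\<bar>x N - x 0\<bar> * inverse (real N) \<le> 1 * inverse (real N)"
        by (rule mult_right_mono[OF xb]) simp
      then show "norm ((x N - x 0) * inverse (real N)) \<le> 1 * inverse (real N)"
        by (simp only: real_norm_def abs_mult abs_inverse abs_of_nat)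
    qed
    show "(\<lambda>N. 1 * inverse (real N)) \<longlonglongrightarrow> 0" using lim_inverse_n by simp
  qed
  then have "(\<lambda>N. (\<Sum>i<N. fi (\<pi> i, \<pi> (Suc i))) / real N - (\<Sum>i<N. fo (\<pi> i, \<pi> (Suc i))) / real N) \<longlonglongrightarrow> 0"
    unfolding d .
  moreover have "(\<lambda>N. (\<Sum>i<N. fi (\<pi> i, \<pi> (Suc i))) / real N - (\<Sum>i<N. fo (\<pi> i, \<pi> (Suc i))) / real N) \<longlonglongrightarrow> (\<Sum>e\<in>E. freq \<pi> e * fi e) - (\<Sum>e\<in>E. freq \<pi> e * fo e)"
    by (rule tendsto_diff[OF i o])
  ultimately have "(\<Sum>e\<in>E. freq \<pi> e * fi e) = (\<Sum>e\<in>E. freq \<pi> e * fo e)"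
    using LIMSEQ_unique by fastforce
  moreover have "(\<Sum>e\<in>E. freq \<pi> e * fo e) = (\<Sum>e\<in>{e\<in>E. fst e = t}. freq \<pi> e)"
    using E by (simp add: sum.inter_filter fo_def if_distrib cong: if_cong)
  moreover have "(\<Sum>e\<in>E. freq \<pi> e * fi e) = (\<Sum>e\<in>{e\<in>E. snd e = t}. freq \<pi> e)"
    using E by (simp add: sum.inter_filter fi_def if_distrib cong: if_cong)
  ultimately show ?thesis by simp
qed

end



lemma fin_edges: "mmpg_arena G \<Longrightarrow> finite (edges G)"
  unfolding mmpg_arena_def by (meson finite_SigmaI finite_subset)

lemma play_steps:
  assumes "mmpg_arena G" "valid_for G UNIV s"
  shows "\<forall>i. (play s (init G) i, play s (init G) (Suc i)) \<in> edges G"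
  using valid_steps[OF assms] assms(1) by (auto simp: mmpg_arena_def)

lemma rew_bound:
  assumes "mmpg_arena G" "\<forall>i. (\<pi> i, \<pi> (Suc i)) \<in> edges G"
  shows "\<forall>i. \<bar>rew G p (\<pi> i, \<pi> (Suc i))\<bar> \<le> (\<Sum>e\<in>edges G. \<bar>rew G p e\<bar>)"
  using assms by (auto intro!: member_le_sum[of _ _ "\<lambda>e. \<bar>rew G p e\<bar>", simplified] fin_edges)

lemma inc_const:
  assumes "\<forall>n. g (hist s v n) = c"
  shows "liminf (\<lambda>n. ereal ((\<Sum>i\<in>{1..n}. g (hist s v i)) / real n)) = ereal c"
proof (rule liminf_ereal_lim)
  have "eventually (\<lambda>n. (\<Sum>i\<in>{1..n}. g (hist s v i)) / real n = c) sequentially"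
    by (rule eventually_sequentiallyI[of 1]) (simp add: assms)
  then show "(\<lambda>n. (\<Sum>i\<in>{1..n}. g (hist s v i)) / real n) \<longlonglongrightarrow> c" by (rule tendsto_eventually)
qed

lemma key1:
  assumes arena: "mmpg_arena G" and p: "p \<in> followers G" and om: "opt_max G p (tmax p)"
    and valid: "valid_for G UNIV \<sigma>" and inc: "incentive_profile G \<gamma>"
    and isp: "is_isp G \<sigma> \<gamma>"
  shows "game_val G p (play \<sigma> (init G) k) \<le> payoff G p \<sigma> + inc_value G \<gamma> p \<sigma>"
proof -
  have iv: "init G \<in> verts G" using arena by (simp add: mmpg_arena_def)
  define s1 where "s1 h = (if length h \<le> k then \<sigma> h else tmax p (last h))" for h
  have tv: "valid_for G {p} (\<lambda>h. tmax p (last h))" using om by (simp add: opt_max_def)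
  have s1v: "valid_for G {p} s1"
    using valid tv unfolding valid_for_def s1_def by auto
  define \<tau> where "\<tau> = combine G p s1 \<sigma>"
  have \<tau>v: "valid_for G UNIV \<tau>" unfolding \<tau>_def
    by (rule combine_valid[OF s1v]) (use valid in \<open>auto simp: valid_for_def\<close>)
  have le1: "payoff G p \<tau> + inc_value G \<gamma> p \<tau> \<le> payoff G p \<sigma> + inc_value G \<gamma> p \<sigma>"
    using isp p s1v unfolding is_isp_def \<tau>_def by blast
  have inc0: "0 \<le> inc_value G \<gamma> p \<tau>"
    unfolding inc_value_def
  proof (rule Liminf_bounded, rule always_eventually, rule allI)
    fix n
    have "\<forall>i. 0 \<le> \<gamma> p (hist \<tau> (init G) i)"
      using inc p valid_hist[OF arena \<tau>v iv] by (auto simp: incentive_profile_def)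
    then show "0 \<le> ereal ((\<Sum>i\<in>{1..n}. \<gamma> p (hist \<tau> (init G) i)) / real n)"
      by (simp add: sum_nonneg)
  qed
  have pre: "hist \<tau> (init G) i = hist \<sigma> (init G) i" if "i \<le> k" for i
    using that
  proof (induction i)
    case 0 then show ?case by simp
  next
    case (Suc i)
    then have "\<tau> (hist \<sigma> (init G) i) = \<sigma> (hist \<sigma> (init G) i)"
      unfolding \<tau>_def combine_def s1_def by simp
    then show ?case using Suc by simp
  qed
  define P where "P = butlast (hist \<sigma> (init G) k)"
  define u where "u = play \<sigma> (init G) k"
  have base: "hist \<tau> (init G) k = P @ [u]"
    unfolding pre[OF order_refl] P_def u_def play_def by simp
  define \<rho> where "\<rho> = combine G p (\<lambda>x. tmax p (last x)) (\<lambda>x. \<sigma> (P @ x))"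
  have sh: "hist \<tau> (init G) (k+i) = P @ hist \<rho> u i" for i
  proof (rule hist_shift[OF base])
    fix i
    have "length (P @ hist \<rho> u i) > k" by (simp add: P_def)
    then show "\<tau> (P @ hist \<rho> u i) = \<rho> (hist \<rho> u i)"
      unfolding \<tau>_def \<rho>_def combine_def s1_def by simp
  qed
  have s2v: "valid_for G (- {p}) (\<lambda>x. \<sigma> (P @ x))"
    using valid unfolding valid_for_def by auto
  have uv: "u \<in> verts G" unfolding u_def using valid_steps[OF arena valid iv] by blast
  have "game_val G p u \<le> mean_payoff (rew G p) (play \<rho> u)"
    using om uv s2v unfolding opt_max_def \<rho>_def by blast
  also have "play \<rho> u = (\<lambda>i. play \<tau> (init G) (k + i))"
    using play_shift[OF sh] by auto
  also have "mean_payoff (rew G p) (\<lambda>i. play \<tau> (init G) (k + i)) = payoff G p \<tau>"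
    unfolding payoff_def by (rule mp_shift[OF rew_bound[OF arena play_steps[OF arena \<tau>v]]])
  finally have "game_val G p u \<le> payoff G p \<tau>" .
  also have "\<dots> \<le> payoff G p \<tau> + inc_value G \<gamma> p \<tau>" using inc0 by (simp add: add_increasing2)
  also note le1
  finally show ?thesis unfolding u_def .
qed



lemma hist_Suc_nth: "i < m \<Longrightarrow> hist s v m ! Suc i = s (take (Suc i) (hist s v m))"
  by (simp add: hist_nth hist_take play_Suc)

lemma key2:
  assumes arena: "mmpg_arena G" and p: "p \<in> followers G" and om: "opt_min G p (tmin p)"
    and psp: "is_psp G tmax tmin \<sigma> \<gamma>" and s'v: "valid_for G {p} \<sigma>'"
    and ne: "\<exists>n. hist (combine G p \<sigma>' \<sigma>) (init G) n \<noteq> hist \<sigma> (init G) n"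
  shows "\<exists>u\<in>range (play \<sigma> (init G)). payoff G p (combine G p \<sigma>' \<sigma>) \<le> game_val G p u
          \<and> inc_value G \<gamma> p (combine G p \<sigma>' \<sigma>) = 0"
proof -
  define \<tau> where "\<tau> = combine G p \<sigma>' \<sigma>"
  define v where "v = init G"
  have iv: "v \<in> verts G" using arena by (simp add: mmpg_arena_def v_def)
  have valid: "valid_for G UNIV \<sigma>" using psp by (simp add: is_psp_def valid_profile_def)
  have \<tau>v: "valid_for G UNIV \<tau>" unfolding \<tau>_def
    by (rule combine_valid[OF s'v]) (use valid in \<open>auto simp: valid_for_def\<close>)
  obtain m where m1: "hist \<tau> v m \<noteq> hist \<sigma> v m" and m2: "\<forall>j<m. hist \<tau> v j = hist \<sigma> v j"
    using ne exists_least_iff[of "\<lambda>m. hist \<tau> v m \<noteq> hist \<sigma> v m"] unfolding \<tau>_def v_def by blast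
  have "m \<noteq> 0" using m1 by (cases m) auto
  then obtain n where mn: "m = Suc n" by (cases m) auto
  define h0 where "h0 = hist \<sigma> v n"
  have h0t: "hist \<tau> v n = h0" using m2 mn h0_def by simp
  have dev0: "\<tau> h0 \<noteq> \<sigma> h0" using m1 mn h0t h0_def by simp
  define u where "u = last h0"
  have own: "owner G u = p" using dev0 unfolding \<tau>_def combine_def u_def by (auto split: if_splits)
  have u_play: "u = play \<sigma> v n" by (simp add: u_def h0_def play_def)
  have devf: "deviating G \<sigma> (hist \<tau> v j) \<and> dev G \<sigma> (hist \<tau> v j) = p" if jn: "n < j" for j
  proof
    define h where "h = hist \<tau> v j"
    have "take (Suc (Suc n)) h = hist \<tau> v (Suc n)" unfolding h_def using jn by (simp add: hist_take)
    moreover have "take (Suc (Suc n)) (hist \<sigma> v j) = hist \<sigma> v (Suc n)" using jn by (simp add: hist_take)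
    ultimately have "h \<noteq> hist \<sigma> v j" using m1 mn by metis
    then show "deviating G \<sigma> (hist \<tau> v j)"
      unfolding deviating_def h_def using valid_hist[OF arena \<tau>v iv] v_def by simp
    define Pr where "Pr i = (Suc i < length h \<and> h ! Suc i \<noteq> \<sigma> (take (Suc i) h))" for i
    have Pn: "Pr n" unfolding Pr_def h_def using jn
      by (simp add: hist_Suc_nth hist_take h0t dev0)
    have bd: "\<And>y. Pr y \<Longrightarrow> y \<le> j" unfolding Pr_def h_def by simp
    have PG: "Pr (Greatest Pr)" by (rule GreatestI_nat[of Pr n j, OF Pn bd])
    define i where "i = Greatest Pr"
    have ij: "i < j" using PG unfolding Pr_def h_def i_def by simp
    have "\<tau> (hist \<tau> v i) \<noteq> \<sigma> (hist \<tau> v i)"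
      using PG ij unfolding Pr_def h_def i_def[symmetric] by (simp add: hist_Suc_nth hist_take)
    then have "owner G (last (hist \<tau> v i)) = p" unfolding \<tau>_def combine_def by (auto split: if_splits)
    moreover have "last (hist \<tau> v i) = h ! i" unfolding h_def using ij by (simp add: hist_nth play_def)
    ultimately show "dev G \<sigma> (hist \<tau> v j) = p"
      unfolding dev_def h_def[symmetric] Pr_def[symmetric] i_def[symmetric] by simp
  qed
  have psp_dev: "\<sigma> h = (if owner G (last h) = dev G \<sigma> h then tmax (dev G \<sigma> h) (last h)
                else tmin (dev G \<sigma> h) (last h))
      \<and> (\<forall>q\<in>followers G. \<gamma> q h =
           (if 2 \<le> length h \<and> deviating G \<sigma> (butlast h) \<and> last h = \<sigma> (butlast h)
               \<and> owner G (last (butlast h)) = q \<and> q \<noteq> dev G \<sigma> h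
            then rmax G + 1 - rew G q (last (butlast h), last h) else 0))"
    if "deviating G \<sigma> h" "dev G \<sigma> h \<in> followers G" for h
    using psp that unfolding is_psp_def by blast
  have move: "\<sigma> (hist \<tau> v j) = tmin p (last (hist \<tau> v j))"
    if "n < j" "owner G (last (hist \<tau> v j)) \<noteq> p" for j
    using psp_dev[of "hist \<tau> v j"] devf[OF that(1)] p that(2) by simp
  have gam0: "\<gamma> p (hist \<tau> v j) = 0" if "n < j" for j
    using psp_dev[of "hist \<tau> v j"] devf[OF that] p by simp
  define P where "P = butlast h0"
  have base: "hist \<tau> v n = P @ [u]" unfolding h0t P_def u_def by (simp add: h0_def)
  define \<rho> where "\<rho> = combine G p (\<lambda>x. \<sigma>' (P @ x)) (\<lambda>x. tmin p (last x))"
  have sh: "hist \<tau> v (n+i) = P @ hist \<rho> u i" for i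
  proof (rule hist_shift[OF base])
    fix i
    assume hi: "hist \<tau> v (n+i) = P @ hist \<rho> u i"
    have lst: "last (P @ hist \<rho> u i) = last (hist \<rho> u i)" by simp
    show "\<tau> (P @ hist \<rho> u i) = \<rho> (hist \<rho> u i)"
    proof (cases "owner G (last (hist \<rho> u i)) = p")
      case True then show ?thesis unfolding \<tau>_def \<rho>_def combine_def lst by simp
    next
      case False
      then have "i \<noteq> 0" using own by (cases i) auto
      then have "n < n + i" by simp
      have "\<tau> (P @ hist \<rho> u i) = \<sigma> (P @ hist \<rho> u i)"
        using False unfolding lst \<tau>_def combine_def by simp
      also have "\<dots> = tmin p (last (hist \<rho> u i))"
        using move[OF \<open>n < n + i\<close>] False unfolding hi lst by blast
      also have "\<dots> = \<rho> (hist \<rho> u i)"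
        using False unfolding \<rho>_def combine_def by simp
      finally show ?thesis .
    qed
  qed
  have s1v: "valid_for G {p} (\<lambda>x. \<sigma>' (P @ x))" using s'v unfolding valid_for_def by auto
  have uv: "u \<in> verts G" unfolding u_play using valid_steps[OF arena valid iv] by blast
  have "payoff G p \<tau> = mean_payoff (rew G p) (\<lambda>i. play \<tau> v (n + i))"
    unfolding payoff_def v_def
    by (rule mp_shift[OF rew_bound[OF arena play_steps[OF arena \<tau>v]], symmetric])
  also have "(\<lambda>i. play \<tau> v (n + i)) = play \<rho> u" using play_shift[OF sh] by auto
  also have "mean_payoff (rew G p) (play \<rho> u) \<le> game_val G p u"
    using om uv s1v unfolding opt_min_def \<rho>_def by blast
  finally have pay: "payoff G p \<tau> \<le> game_val G p u" .
  define K where "K = (\<Sum>i\<in>{1..n}. \<gamma> p (hist \<tau> v i))"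
  have "eventually (\<lambda>N. K * inverse (real N) = (\<Sum>i\<in>{1..N}. \<gamma> p (hist \<tau> v i)) / real N) sequentially"
  proof (rule eventually_sequentiallyI[of n])
    fix N assume "n \<le> N"
    have "(\<Sum>i\<in>{1..N}. \<gamma> p (hist \<tau> v i)) = K" unfolding K_def
    proof (rule sum.mono_neutral_right)
      show "finite {1..N}" by simp
      show "{1..n} \<subseteq> {1..N}" using \<open>n \<le> N\<close> by simp
      show "\<forall>i\<in>{1..N} - {1..n}. \<gamma> p (hist \<tau> v i) = 0"
      proof
        fix i assume "i \<in> {1..N} - {1..n}"
        then have "n < i" by auto
        then show "\<gamma> p (hist \<tau> v i) = 0" by (rule gam0)
      qed
    qed
    then show "K * inverse (real N) = (\<Sum>i\<in>{1..N}. \<gamma> p (hist \<tau> v i)) / real N"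
      by (simp add: divide_inverse)
  qed
  moreover have "(\<lambda>N. K * inverse (real N)) \<longlonglongrightarrow> 0"
    using tendsto_mult_right_zero[OF lim_inverse_n, of K] by simp
  ultimately have "(\<lambda>N. (\<Sum>i\<in>{1..N}. \<gamma> p (hist \<tau> v i)) / real N) \<longlonglongrightarrow> 0"
    by (rule Lim_transform_eventually[rotated])
  then have inc: "inc_value G \<gamma> p \<tau> = 0"
    unfolding inc_value_def v_def[symmetric] zero_ereal_def by (rule liminf_ereal_lim)
  have ur: "u \<in> range (play \<sigma> v)" using u_play by simp
  show ?thesis unfolding \<tau>_def[symmetric] v_def[symmetric]
    by (rule bexI[OF _ ur]) (use pay inc in simp)
qed



lemma range_play_fin:
  assumes "mmpg_arena G" "valid_for G UNIV s"
  shows "finite (range (play s (init G)))" "range (play s (init G)) \<subseteq> verts G"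
proof -
  have iv: "init G \<in> verts G" using assms(1) by (simp add: mmpg_arena_def)
  show sub: "range (play s (init G)) \<subseteq> verts G" using valid_steps[OF assms iv] by auto
  show "finite (range (play s (init G)))"
    by (rule finite_subset[OF sub]) (use assms(1) in \<open>simp add: mmpg_arena_def\<close>)
qed

lemma part1:
  assumes arena: "mmpg_arena G"
    and opt: "\<forall>p\<in>followers G. opt_max G p (tmax p) \<and> opt_min G p (tmin p)"
    and wb: "well_behaved G \<sigma>" and psp: "is_psp G tmax tmin \<sigma> \<gamma>" and isp: "is_isp G \<sigma> \<gamma>"
  shows "LP_sat G (visited (play \<sigma> (init G))) (inf_visited (play \<sigma> (init G)))
            (\<lambda>v. \<Sum>e\<in>{e\<in>edges G. fst e = v}. freq (play \<sigma> (init G)) e) (freq (play \<sigma> (init G)))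
            (\<lambda>p. \<gamma> p [init G])"
proof -
  define \<pi> where "\<pi> = play \<sigma> (init G)"
  define S where "S = inf_visited \<pi>"
  have valid: "valid_for G UNIV \<sigma>" using psp by (simp add: is_psp_def valid_profile_def)
  have inc: "incentive_profile G \<gamma>" using psp by (simp add: is_psp_def)
  have E: "finite (edges G)" by (rule fin_edges[OF arena])
  have st: "\<forall>i. (\<pi> i, \<pi> (Suc i)) \<in> edges G" unfolding \<pi>_def by (rule play_steps[OF arena valid])
  have cv: "\<forall>e\<in>edges G. convergent (freq_seq \<pi> e)" using wb by (simp add: well_behaved_def \<pi>_def)
  have c1: "\<forall>v\<in>verts G. (v \<notin> S \<longrightarrow> (\<Sum>e\<in>{e\<in>edges G. fst e = v}. freq \<pi> e) = 0)
       \<and> (v \<in> S \<longrightarrow> (\<Sum>e\<in>{e\<in>edges G. fst e = v}. freq \<pi> e) \<ge> 0)"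
  proof (intro ballI conjI impI)
    fix v assume "v \<notin> S"
    then show "(\<Sum>e\<in>{e\<in>edges G. fst e = v}. freq \<pi> e) = 0"
      using freq_zero[OF E st cv] unfolding S_def by (intro sum.neutral) auto
  next
    fix v
    show "(\<Sum>e\<in>{e\<in>edges G. fst e = v}. freq \<pi> e) \<ge> 0"
      using freq_nonneg[OF E st cv] by (intro sum_nonneg) auto
  qed
  have c2: "\<forall>e\<in>edges G. (e \<notin> S \<times> S \<longrightarrow> freq \<pi> e = 0) \<and> (e \<in> S \<times> S \<longrightarrow> freq \<pi> e \<ge> 0)"
    using freq_zero[OF E st cv] freq_nonneg[OF E st cv] unfolding S_def by blast
  have c3: "(\<Sum>v\<in>verts G. \<Sum>e\<in>{e\<in>edges G. fst e = v}. freq \<pi> e) = 1"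
  proof -
    have "fst ` edges G \<subseteq> verts G" using arena by (auto simp: mmpg_arena_def)
    then have "(\<Sum>v\<in>verts G. \<Sum>e\<in>{e\<in>edges G. fst e = v}. freq \<pi> e) = (\<Sum>e\<in>edges G. freq \<pi> e)"
      using sum.group[OF E _ , of "verts G" fst "freq \<pi>"] arena by (simp add: mmpg_arena_def)
    also have "\<dots> = 1" by (rule freq_sum1[OF E st cv])
    finally show ?thesis .
  qed
  have c4: "\<forall>t\<in>S. (\<Sum>e\<in>{e\<in>edges G. fst e = t}. freq \<pi> e) = (\<Sum>e\<in>{e\<in>edges G. snd e = t}. freq \<pi> e)"
    using freq_flow[OF E st cv] by blast
  have c5: "\<gamma> p [init G] \<ge> 0 \<and>
        ereal (\<gamma> p [init G] + (\<Sum>e\<in>edges G. freq \<pi> e * rew G p e)) \<ge> Max (game_val G p ` visited \<pi>)"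
    if p: "p \<in> followers G" for p
  proof
    show "\<gamma> p [init G] \<ge> 0" using inc p by (simp add: incentive_profile_def is_hist_from_def)
    have pay: "payoff G p \<sigma> = ereal (\<Sum>e\<in>edges G. freq \<pi> e * rew G p e)"
      unfolding payoff_def \<pi>_def[symmetric] by (rule mp_conv[OF E st cv])
    have iv: "inc_value G \<gamma> p \<sigma> = ereal (\<gamma> p [init G])"
      unfolding inc_value_def by (rule inc_const) (use psp p in \<open>simp add: is_psp_def\<close>)
    have fin: "finite (visited \<pi>)" "visited \<pi> \<noteq> {}"
      using range_play_fin[OF arena valid] unfolding visited_def \<pi>_def by auto
    show "ereal (\<gamma> p [init G] + (\<Sum>e\<in>edges G. freq \<pi> e * rew G p e)) \<ge> Max (game_val G p ` visited \<pi>)"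
    proof (subst Max_le_iff)
      show "finite (game_val G p ` visited \<pi>)" using fin by simp
      show "game_val G p ` visited \<pi> \<noteq> {}" using fin by simp
      show "\<forall>a\<in>game_val G p ` visited \<pi>. a \<le> ereal (\<gamma> p [init G] + (\<Sum>e\<in>edges G. freq \<pi> e * rew G p e))"
      proof
        fix a assume "a \<in> game_val G p ` visited \<pi>"
        then obtain k where a: "a = game_val G p (\<pi> k)" unfolding visited_def by auto
        have "a \<le> payoff G p \<sigma> + inc_value G \<gamma> p \<sigma>" unfolding a \<pi>_def
          by (rule key1[OF arena p _ valid inc isp, of tmax]) (use opt p in blast)
        then show "a \<le> ereal (\<gamma> p [init G] + (\<Sum>e\<in>edges G. freq \<pi> e * rew G p e))"
          unfolding pay iv by (simp add: add.commute)
      qed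
    qed
  qed
  show ?thesis unfolding \<pi>_def[symmetric] S_def[symmetric] LP_sat_def
    using c1 c2 c3 c4 c5 by blast
qed

lemma part2:
  assumes arena: "mmpg_arena G"
    and opt: "\<forall>p\<in>followers G. opt_max G p (tmax p) \<and> opt_min G p (tmin p)"
    and valid: "valid_profile G \<sigma>" and wb: "well_behaved G \<sigma>"
    and LP: "LP_sat G (visited (play \<sigma> (init G))) (inf_visited (play \<sigma> (init G)))
               (\<lambda>v. \<Sum>e\<in>{e\<in>edges G. fst e = v}. freq (play \<sigma> (init G)) e) (freq (play \<sigma> (init G))) g"
    and psp: "is_psp G tmax tmin \<sigma>' \<gamma>'" and same: "play \<sigma>' (init G) = play \<sigma> (init G)"
    and g: "\<forall>p\<in>followers G. \<gamma>' p [init G] = g p"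
  shows "is_isp G \<sigma>' \<gamma>'"
  unfolding is_isp_def
proof (intro ballI allI impI)
  fix p s assume p: "p \<in> followers G" and sv: "valid_for G {p} s"
  define \<pi> where "\<pi> = play \<sigma> (init G)"
  have validu: "valid_for G UNIV \<sigma>" using valid by (simp add: valid_profile_def)
  have E: "finite (edges G)" by (rule fin_edges[OF arena])
  have st: "\<forall>i. (\<pi> i, \<pi> (Suc i)) \<in> edges G" unfolding \<pi>_def by (rule play_steps[OF arena validu])
  have cv: "\<forall>e\<in>edges G. convergent (freq_seq \<pi> e)" using wb by (simp add: well_behaved_def \<pi>_def)
  have pay: "payoff G p \<sigma>' = ereal (\<Sum>e\<in>edges G. freq \<pi> e * rew G p e)"
    unfolding payoff_def same \<pi>_def[symmetric] by (rule mp_conv[OF E st cv])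
  have iv: "inc_value G \<gamma>' p \<sigma>' = ereal (g p)"
    unfolding inc_value_def by (rule inc_const) (use psp p g in \<open>simp add: is_psp_def\<close>)
  define \<tau> where "\<tau> = combine G p s \<sigma>'"
  show "payoff G p \<tau> + inc_value G \<gamma>' p \<tau> \<le> payoff G p \<sigma>' + inc_value G \<gamma>' p \<sigma>'"
  proof (cases "\<exists>n. hist \<tau> (init G) n \<noteq> hist \<sigma>' (init G) n")
    case False
    then have "\<forall>n. hist \<tau> (init G) n = hist \<sigma>' (init G) n" by blast
    then have "play \<tau> (init G) = play \<sigma>' (init G)" by (auto simp: play_def)
    moreover have "inc_value G \<gamma>' p \<tau> = inc_value G \<gamma>' p \<sigma>'"
      unfolding inc_value_def using \<open>\<forall>n. hist \<tau> (init G) n = hist \<sigma>' (init G) n\<close> by simp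
    ultimately show ?thesis by (simp add: payoff_def)
  next
    case True
    have om: "opt_min G p (tmin p)" using opt p by blast
    obtain u where u: "u \<in> range (play \<sigma>' (init G))" and pu: "payoff G p \<tau> \<le> game_val G p u"
      and i0: "inc_value G \<gamma>' p \<tau> = 0"
      using key2[OF arena p om psp sv True[unfolded \<tau>_def]] unfolding \<tau>_def by blast
    have uQ: "u \<in> visited \<pi>" using u same by (simp add: visited_def \<pi>_def)
    have fin: "finite (visited \<pi>)"
      using range_play_fin[OF arena validu] unfolding visited_def \<pi>_def by auto
    have "game_val G p u \<le> Max (game_val G p ` visited \<pi>)" using fin uQ by simp
    also have "\<dots> \<le> ereal (g p + (\<Sum>e\<in>edges G. freq \<pi> e * rew G p e))"
      using LP p unfolding LP_sat_def \<pi>_def[symmetric] by blast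
    finally have "payoff G p \<tau> \<le> ereal (g p + (\<Sum>e\<in>edges G. freq \<pi> e * rew G p e))"
      using pu by order
    then show ?thesis unfolding pay iv i0 by (simp add: add.commute)
  qed
qed

theorem corollary1:
  fixes G :: "('p, 'v) arena"
    and tmax tmin :: "'p \<Rightarrow> 'v \<Rightarrow> 'v"
  assumes arena: "mmpg_arena G"
    and opt: "\<forall>p\<in>followers G. opt_max G p (tmax p) \<and> opt_min G p (tmin p)"
  shows
    "(\<forall>\<sigma> \<gamma>. well_behaved G \<sigma> \<and> is_psp G tmax tmin \<sigma> \<gamma> \<and> is_isp G \<sigma> \<gamma> \<longrightarrow>
        (let \<pi> = play \<sigma> (init G) in
          LP_sat G (visited \<pi>) (inf_visited \<pi>)
            (\<lambda>v. \<Sum>e\<in>{e\<in>edges G. fst e = v}. freq \<pi> e) (freq \<pi>)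
            (\<lambda>p. \<gamma> p [init G])))
   \<and> (\<forall>\<sigma> \<gamma> g. valid_profile G \<sigma> \<and> well_behaved G \<sigma> \<and> incentive_profile G \<gamma>
        \<and> (\<forall>p\<in>followers G. inc_value G \<gamma> p \<sigma> = ereal (g p))
        \<and> (let \<pi> = play \<sigma> (init G) in
             LP_sat G (visited \<pi>) (inf_visited \<pi>)
               (\<lambda>v. \<Sum>e\<in>{e\<in>edges G. fst e = v}. freq \<pi> e) (freq \<pi>) g)
      \<longrightarrow> (\<forall>\<sigma>' \<gamma>'. is_psp G tmax tmin \<sigma>' \<gamma>' \<and> play \<sigma>' (init G) = play \<sigma> (init G)
             \<and> (\<forall>p\<in>followers G. \<gamma>' p [init G] = g p)
           \<longrightarrow> is_isp G \<sigma>' \<gamma>'))"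
  using part1[OF arena opt] part2[OF arena opt] unfolding Let_def by blast

end
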